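(* Let $\Delta=\{(u,v)\in\mathbb{R}^2: 0\le v\le1,\ 0\le u\le v\}$. If $a,b,p,q>0$ and $b<1$, then $$\int_\Delta u^{a-1}(1-u)^{b-1}v^{p-1}(1-v)^{q-1}\,du\,dv=\frac{B(a+p,q)}{a}\lim_{t\to1^-,\ t\in\mathbb{R}}{}_3F_2\Big(\begin{matrix}a,\ 1-b,\ a+p\\ 1+a,\ a+p+q\end{matrix};t\Big).$$
   Context: $B(u,v)=\int_0^1t^{u-1}(1-t)^{v-1}dt$ is the beta function. With $(\alpha,n)=\Gamma(\alpha+n)/\Gamma(\alpha)$, the generalized hypergeometric function is ${}_3F_2\big(\begin{smallmatrix}\alpha_1,\alpha_2,\alpha_3\\ \beta_1,\beta_2\end{smallmatrix};x\big)=\sum_{n\ge0}\frac{(\alpha_1,n)(\alpha_2,n)(\alpha_3,n)}{(\beta_1,n)(\beta_2,n)(1,n)}x^n$ for $|x|<1$. *)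

theory Defs
  imports "HOL-Analysis.Analysis"
begin

definition betaB :: "real \<Rightarrow> real \<Rightarrow> real" where
  "betaB u v = (LINT t:{0..1}|lborel. t powr (u - 1) * (1 - t) powr (v - 1))"

definition hyp3F2 :: "real \<Rightarrow> real \<Rightarrow> real \<Rightarrow> real \<Rightarrow> real \<Rightarrow> real \<Rightarrow> real" where
  "hyp3F2 a1 a2 a3 b1 b2 x =
     (\<Sum>n. pochhammer a1 n * pochhammer a2 n * pochhammer a3 n /
           (pochhammer b1 n * pochhammer b2 n * pochhammer 1 n) * x ^ n)"

definition Delta :: "(real \<times> real) set" where
  "Delta = {(u, v). 0 \<le> v \<and> v \<le> 1 \<and> 0 \<le> u \<and> u \<le> v}"

end

theory Submission imports Defs begin

lemma betaB_eq:
  assumes "x > 0" "y > 0"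
  shows "betaB x y = Beta x y"
proof -
  let ?f = "\<lambda>t::real. t powr (x - 1) * (1 - t) powr (y - 1)"
  have I: "integral\<^sup>N lborel (\<lambda>t. indicator {0..1} t * ?f t) = Beta x y"
    by (rule nn_integral_has_integral_lebesgue) (use has_integral_Beta_real[OF assms] in auto)
  have "betaB x y = integral\<^sup>L lborel (\<lambda>t. indicator {0..1} t * ?f t)"
    unfolding betaB_def set_lebesgue_integral_def by simp
  also have "\<dots> = enn2real (\<integral>\<^sup>+ t. ennreal (indicator {0..1} t * ?f t) \<partial>lborel)"
  proof (rule integral_eq_nn_integral)
    show "(\<lambda>t. indicator {0..1} t * ?f t) \<in> borel_measurable lborel" by measurable
    show "AE t in lborel. 0 \<le> indicator {0..1} t * ?f t" by (intro AE_I2) simp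
  qed
  also have "\<dots> = Beta x y"
  proof -
    have "Beta x y > 0" using assms by (simp add: Beta_def Gamma_real_pos)
    then show ?thesis using I by simp
  qed
  finally show ?thesis .
qed

lemma Beta_shift:
  assumes "x > 0" "y > 0"
  shows "Beta (x + real n) y = Beta x y * pochhammer x n / pochhammer (x+y) n"
proof -
  have nz: "z \<notin> \<int>\<^sub>\<le>\<^sub>0" if "z > 0" for z :: real using that by (auto elim!: nonpos_Ints_cases)
  have "pochhammer x n = Gamma (x + n) / Gamma x" by (rule pochhammer_Gamma[OF nz[OF assms(1)]])
  moreover have "pochhammer (x+y) n = Gamma (x + y + n) / Gamma (x+y)"
    by (rule pochhammer_Gamma) (rule nz, use assms in auto)
  moreover have "Gamma x > 0" "Gamma (x+y) > 0" "Gamma (x+y+n) > 0" "Gamma (x+n) > 0"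
    using assms by (auto intro!: Gamma_real_pos)
  ultimately show ?thesis
    by (simp add: Beta_def field_simps add_ac)
qed

lemma binom_series:
  fixes u b :: real
  assumes "0 \<le> u" "u < 1"
  shows "(\<lambda>n. pochhammer (1-b) n / fact n * u^n) sums ((1-u) powr (b-1))"
proof -
  have "(\<lambda>n. ((b-1) gchoose n) * (-u)^n) sums ((1 + (-u)) powr (b-1))"
    by (rule gen_binomial_real) (use assms in auto)
  moreover have "((b-1) gchoose n) * (-u)^n = pochhammer (1-b) n / fact n * u^n" for n
  proof -
    have m1: "(-1::real)^n * (-1)^n = 1" by (induction n) auto
    have "((b-1) gchoose n) * (-u)^n = ((-1)^n * (-1)^n) * (pochhammer (-(b-1)) n / fact n * u^n)"
      unfolding gbinomial_pochhammer power_minus[of u n] by (simp only: mult_ac times_divide_eq_left times_divide_eq_right)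
    also have "\<dots> = pochhammer (1-b) n / fact n * u^n" unfolding m1 by simp
    finally show ?thesis .
  qed
  ultimately show ?thesis by simp
qed

lemma abel_nonneg:
  fixes c :: "nat \<Rightarrow> real"
  assumes "\<And>n. c n \<ge> 0" "summable c"
  shows "((\<lambda>t. \<Sum>n. c n * t^n) \<longlongrightarrow> (\<Sum>n. c n)) (at_left 1)"
proof -
  have "uniform_limit {0..1} (\<lambda>n t. \<Sum>i<n. c i * t^i) (\<lambda>t. \<Sum>i. c i * t^i) sequentially"
    by (rule Weierstrass_m_test_ev[OF _ assms(2)])
       (auto intro!: always_eventually simp: abs_mult assms(1) power_le_one mult_left_le)
  then have "continuous_on {0..1} (\<lambda>t. \<Sum>i. c i * t^i)"
    by (rule uniform_limit_theorem[rotated]) (auto intro!: eventuallyI continuous_intros)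
  from continuous_on_Icc_at_leftD[OF this] show ?thesis by simp
qed


lemma inner_int:
  fixes v e K :: real
  assumes "0 \<le> v" "e > 0" "K \<ge> 0"
  shows "(\<integral>\<^sup>+u. ennreal (indicator {0..v} u * (K * u powr (e - 1))) \<partial>lborel) = ennreal (K * (v powr e / e))"
proof -
  have h0: "((\<lambda>u. u powr (e - 1)) has_integral (v powr (e - 1 + 1) / (e - 1 + 1))) {0..v}"
    by (rule has_integral_powr_from_0) (use assms in auto)
  have h: "((\<lambda>u. K * u powr (e - 1)) has_integral (K * (v powr e / e))) {0..v}"
    using has_integral_mult_right[OF h0, of K] by simp
  show ?thesis
    by (rule nn_integral_has_integral_lebesgue[OF _ h]) (use assms in simp)
qed

lemma beta_int:
  fixes x y K :: real
  assumes "x > 0" "y > 0" "K \<ge> 0"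
  shows "(\<integral>\<^sup>+t. ennreal (indicator {0..1} t * (K * (t powr (x - 1) * (1 - t) powr (y - 1)))) \<partial>lborel) = ennreal (K * Beta x y)"
proof -
  have h: "((\<lambda>t. K * (t powr (x - 1) * (1 - t) powr (y - 1))) has_integral (K * Beta x y)) {0..1}"
    by (rule has_integral_mult_right[OF has_integral_Beta_real[OF assms(1,2)]])
  show ?thesis
    by (rule nn_integral_has_integral_lebesgue[OF _ h]) (use assms in simp)
qed

theorem proposition4p12:
  fixes a b p q :: real
  assumes "a > 0" "b > 0" "p > 0" "q > 0" "b < 1"
  shows "\<exists>L. ((\<lambda>t. hyp3F2 a (1 - b) (a + p) (1 + a) (a + p + q) t) \<longlongrightarrow> L) (at_left 1) \<and>
    set_integrable lborel Delta
      (\<lambda>(u, v). u powr (a - 1) * (1 - u) powr (b - 1) * v powr (p - 1) * (1 - v) powr (q - 1)) \<and>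
    (LINT x:Delta|lborel.
      (\<lambda>(u, v). u powr (a - 1) * (1 - u) powr (b - 1) * v powr (p - 1) * (1 - v) powr (q - 1)) x)
      = betaB (a + p) q / a * L"
proof -
  define F where "F = (\<lambda>(u::real, v::real). u powr (a - 1) * (1 - u) powr (b - 1) * v powr (p - 1) * (1 - v) powr (q - 1))"
  define c where "c = (\<lambda>n. pochhammer a n * pochhammer (1 - b) n * pochhammer (a + p) n /
           (pochhammer (1 + a) n * pochhammer (a + p + q) n * pochhammer 1 n))"
  define K where "K = betaB (a + p) q / a"
  define C where "C = (\<lambda>n. pochhammer (1 - b) n / fact n :: real)"
  define g where "g = (\<lambda>n (u::real, v::real). if 0 \<le> v \<and> v < 1 \<and> 0 \<le> u \<and> u \<le> v then
       C n * u powr (a + real n - 1) * (v powr (p - 1) * (1 - v) powr (q - 1)) else 0)"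
  have Cnn: "C n \<ge> 0" for n unfolding C_def using assms by (auto intro!: divide_nonneg_pos pochhammer_nonneg)
  have cnn: "c n \<ge> 0" for n unfolding c_def using assms
    by (auto intro!: divide_nonneg_pos mult_nonneg_nonneg mult_pos_pos pochhammer_nonneg pochhammer_pos)
  have Fnn: "F x \<ge> 0" for x unfolding F_def by (auto split: prod.splits)
  have gnn: "g n x \<ge> 0" for n x unfolding g_def using Cnn by (auto split: prod.splits)
  have Kpos: "K > 0" unfolding K_def using assms betaB_eq[of "a+p" q]
    by (auto simp: Beta_def Gamma_real_pos)
  have Fmeas[measurable]: "F \<in> borel_measurable borel" unfolding F_def borel_prod[symmetric] by measurable
  have gmeas[measurable]: "g n \<in> borel_measurable borel" for n unfolding g_def borel_prod[symmetric] by measurable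
  have D1: "indicator Delta x * F x = (if 0 \<le> snd x \<and> snd x \<le> 1 \<and> 0 \<le> fst x \<and> fst x \<le> snd x then F x else 0)" for x
    by (cases x) (auto simp: Delta_def indicator_def)
  have Dmeas[measurable]: "(\<lambda>x. indicator Delta x * F x) \<in> borel_measurable borel"
  proof -
    have "Delta = {x. 0 \<le> snd x \<and> snd x \<le> 1 \<and> 0 \<le> fst x \<and> fst x \<le> snd x}"
      by (auto simp: Delta_def)
    also have "closed \<dots>"
      by (intro closed_Collect_conj closed_Collect_le continuous_intros)
    finally have [measurable]: "Delta \<in> sets borel" by (rule borel_closed)
    show ?thesis by measurable
  qed
  have ptw: "ennreal (indicator Delta x * F x) = (\<Sum>n. ennreal (g n x))" for x
  proof -
    obtain u v where x: "x = (u, v)" by (cases x)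
    show ?thesis
    proof (cases "0 \<le> v \<and> v < 1 \<and> 0 \<le> u \<and> u \<le> v")
      case False
      have h0: "indicator Delta x * F x = 0"
      proof (cases "x \<in> Delta")
        case True
        then have "v = 1" using False x by (auto simp: Delta_def)
        then show ?thesis using x by (simp add: F_def)
      qed simp
      have g0: "g n x = 0" for n unfolding x g_def case_prod_conv by (rule if_not_P[OF False])
      show ?thesis unfolding h0 g0 by simp
    next
      case True
      let ?V = "v powr (p - 1) * (1 - v) powr (q - 1)"
      have s: "(\<lambda>n. C n * u^n) sums ((1-u) powr (b-1))"
        unfolding C_def by (rule binom_series) (use True in auto)
      have "(\<lambda>n. u powr (a - 1) * (C n * u^n) * ?V) sums (u powr (a - 1) * ((1-u) powr (b-1)) * ?V)"
        by (intro sums_mult sums_mult2 s)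
      moreover have "u powr (a - 1) * (C n * u^n) * ?V = g n x" for n
      proof (cases "u = 0")
        case True then show ?thesis using x \<open>0 \<le> v \<and> v < 1 \<and> 0 \<le> u \<and> u \<le> v\<close> by (simp add: g_def)
      next
        case False
        then have "u > 0" using True by auto
        then have "u powr (a + real n - 1) = u powr (a - 1) * u ^ n"
          by (simp add: powr_add[symmetric] powr_realpow[symmetric] algebra_simps)
        then show ?thesis using x True by (simp add: g_def)
      qed
      ultimately have gs: "(\<lambda>n. g n x) sums F x" using x by (simp add: F_def mult_ac)
      have "x \<in> Delta" using True x by (simp add: Delta_def)
      then have "ennreal (indicator Delta x * F x) = ennreal (\<Sum>n. g n x)" using sums_unique[OF gs] by simp
      also have "\<dots> = (\<Sum>n. ennreal (g n x))"
        by (rule suminf_ennreal2[symmetric]) (use gnn gs sums_summable in auto)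
      finally show ?thesis .
    qed
  qed
  have gint: "(\<integral>\<^sup>+x. ennreal (g n x) \<partial>lborel) = ennreal (K * c n)" for n
  proof -
    define e where "e = a + real n"
    have e: "e > 0" unfolding e_def using assms by simp
    have inner: "(\<integral>\<^sup>+u. ennreal (g n (u,v)) \<partial>lborel) =
       ennreal (indicator {0..1} v * (C n / e * (v powr (e + p - 1) * (1 - v) powr (q - 1))))" for v
    proof (cases "0 \<le> v \<and> v < 1")
      case True
      have "(\<integral>\<^sup>+u. ennreal (g n (u,v)) \<partial>lborel) = (\<integral>\<^sup>+u. ennreal (indicator {0..v} u *
            ((C n * (v powr (p-1) * (1-v) powr (q-1))) * u powr (e - 1))) \<partial>lborel)"
        by (rule nn_integral_cong) (use True in \<open>auto simp: g_def e_def indicator_def mult_ac\<close>)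
      also have "\<dots> = ennreal ((C n * (v powr (p-1) * (1-v) powr (q-1))) * (v powr e / e))"
        by (rule inner_int) (use True e Cnn in auto)
      also have "\<dots> = ennreal (indicator {0..1} v * (C n / e * (v powr (e + p - 1) * (1 - v) powr (q - 1))))"
      proof -
        have "v powr (e + p - 1) = v powr (p - 1) * v powr e" by (simp add: powr_add[symmetric] algebra_simps)
        then show ?thesis using True by (simp add: indicator_def field_simps)
      qed
      finally show ?thesis .
    next
      case False
      then have z1: "g n (u,v) = 0" for u by (auto simp: g_def)
      have z2: "indicator {0..1} v * (C n / e * (v powr (e + p - 1) * (1 - v) powr (q - 1))) = 0"
        using False by (cases "v = 1") (auto simp: indicator_def)
      show ?thesis unfolding z1 z2 by simp
    qed
    have gm: "(\<lambda>x. ennreal (g n x)) \<in> borel_measurable (lborel \<Otimes>\<^sub>M lborel)"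
      by (simp only: lborel_prod measurable_lborel1) measurable
    have "(\<integral>\<^sup>+x. ennreal (g n x) \<partial>lborel) = (\<integral>\<^sup>+x. ennreal (g n x) \<partial>(lborel \<Otimes>\<^sub>M lborel))"
      by (simp only: lborel_prod)
    also have "\<dots> = (\<integral>\<^sup>+v. (\<integral>\<^sup>+u. ennreal (g n (u,v)) \<partial>lborel) \<partial>lborel)"
      by (rule lborel_pair.nn_integral_snd[symmetric, OF gm])
    also have "\<dots> = (\<integral>\<^sup>+v. ennreal (indicator {0..1} v * (C n / e * (v powr (e + p - 1) * (1 - v) powr (q - 1)))) \<partial>lborel)"
      by (simp only: inner)
    also have "\<dots> = ennreal (C n / e * Beta (e + p) q)"
      by (rule beta_int) (use e assms Cnn in auto)
    also have "C n / e * Beta (e + p) q = K * c n"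
    proof -
      have B: "Beta (e + p) q = Beta (a+p) q * pochhammer (a+p) n / pochhammer (a+p+q) n"
        using Beta_shift[of "a+p" q n] assms by (simp add: e_def add_ac)
      have P: "pochhammer a n * (a + real n) = a * pochhammer (1 + a) n"
        using pochhammer_Suc[of a n] pochhammer_rec[of a n] by (simp add: add_ac)
      have pos: "pochhammer a n > 0" "pochhammer (1+a) n > 0" "pochhammer (a+p+q) n > 0"
        using assms by (auto intro!: pochhammer_pos)
      have K': "K = Beta (a+p) q / a" unfolding K_def using betaB_eq[of "a+p" q] assms by simp
      have Q: "pochhammer (1 + a) n = pochhammer a n * (a + real n) / a" using P assms by (simp add: field_simps)
      have an: "a + real n > 0" using assms by simp
      have alg: "Pb / f / e * (Bt * Pp / Pq) = Bt / a * (pa * Pb * Pp / (pa * e / a * Pq * f))"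
        if "pa > 0" "a > 0" "e > 0" "Pq > 0" "f > 0" for pa a e Pq f Pb Bt Pp :: real
        using that by (simp add: field_simps)
      show ?thesis
        unfolding K' c_def C_def B Q pochhammer_fact[symmetric]
        unfolding e_def by (rule alg) (use pos assms an in auto)
    qed
    finally show ?thesis .
  qed
  have fin: "(\<integral>\<^sup>+x. ennreal (indicator Delta x * F x) \<partial>lborel) < \<infinity>"
  proof -
    define h1 where "h1 = (\<lambda>u::real. indicator {0..1} u * (u powr (a-1) * (1-u) powr (b-1)))"
    define h2 where "h2 = (\<lambda>v::real. indicator {0..1} v * (v powr (p-1) * (1-v) powr (q-1)))"
    have h1nn: "h1 u \<ge> 0" for u unfolding h1_def by auto
    have h2nn: "h2 u \<ge> 0" for u unfolding h2_def by auto
    have [measurable]: "h1 \<in> borel_measurable borel" "h2 \<in> borel_measurable borel"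
      unfolding h1_def h2_def by measurable
    have i1: "(\<integral>\<^sup>+u. ennreal (h1 u) \<partial>lborel) = ennreal (Beta a b)"
      using beta_int[of a b 1] assms unfolding h1_def by simp
    have i2: "(\<integral>\<^sup>+u. ennreal (h2 u) \<partial>lborel) = ennreal (Beta p q)"
      using beta_int[of p q 1] assms unfolding h2_def by simp
    have "(\<integral>\<^sup>+x. ennreal (indicator Delta x * F x) \<partial>lborel) \<le> (\<integral>\<^sup>+x. ennreal (h1 (fst x) * h2 (snd x)) \<partial>lborel)"
    proof (rule nn_integral_mono)
      fix x :: "real \<times> real"
      obtain u v where x: "x = (u, v)" by (cases x)
      show "ennreal (indicator Delta x * F x) \<le> ennreal (h1 (fst x) * h2 (snd x))"
      proof (cases "x \<in> Delta")
        case True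
        then have "u \<in> {0..1}" "v \<in> {0..1}" using x by (auto simp: Delta_def)
        then have "indicator Delta x * F x = h1 (fst x) * h2 (snd x)"
          using True x unfolding h1_def h2_def F_def by (simp add: mult_ac)
        then show ?thesis by simp
      next
        case False
        then show ?thesis using h1nn h2nn by (simp add: ennreal_leI)
      qed
    qed
    also have "\<dots> = (\<integral>\<^sup>+x. ennreal (h1 (fst x) * h2 (snd x)) \<partial>(lborel \<Otimes>\<^sub>M lborel))"
      by (simp only: lborel_prod)
    also have "\<dots> = (\<integral>\<^sup>+u. (\<integral>\<^sup>+v. ennreal (h1 u) * ennreal (h2 v) \<partial>lborel) \<partial>lborel)"
    proof -
      have m: "(\<lambda>x. ennreal (h1 (fst x)) * ennreal (h2 (snd x))) \<in> borel_measurable (lborel \<Otimes>\<^sub>M lborel)"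
        by measurable
      show ?thesis using lborel.nn_integral_fst[OF m] by (simp add: ennreal_mult h1nn h2nn)
    qed
    also have "\<dots> = (\<integral>\<^sup>+u. ennreal (h1 u) * ennreal (Beta p q) \<partial>lborel)"
      by (rule nn_integral_cong, subst nn_integral_cmult) (auto simp: i2)
    also have "\<dots> = ennreal (Beta a b) * ennreal (Beta p q)"
      by (subst nn_integral_multc) (auto simp: i1)
    also have "\<dots> < \<infinity>" by (simp add: ennreal_mult_less_top)
    finally show ?thesis .
  qed
  have I: "(\<integral>\<^sup>+x. ennreal (indicator Delta x * F x) \<partial>lborel) = (\<Sum>n. ennreal (K * c n))"
    by (simp add: ptw nn_integral_suminf gint)
  have "summable (\<lambda>n. K * c n)"
    by (rule summable_suminf_not_top) (use I fin Kpos cnn in auto)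
  then have sc: "summable c" using Kpos by (simp add: summable_cmult_iff)
  have I2: "(\<integral>\<^sup>+x. ennreal (indicator Delta x * F x) \<partial>lborel) = ennreal (K * (\<Sum>n. c n))"
  proof -
    have "summable (\<lambda>n. K * c n)" by (rule summable_mult[OF sc])
    then have "(\<Sum>n. ennreal (K * c n)) = ennreal (\<Sum>n. K * c n)"
      by (intro suminf_ennreal2) (use Kpos cnn in auto)
    also have "(\<Sum>n. K * c n) = K * (\<Sum>n. c n)" by (rule suminf_mult[OF sc])
    finally show ?thesis using I by simp
  qed
  have lim: "((\<lambda>t. hyp3F2 a (1 - b) (a + p) (1 + a) (a + p + q) t) \<longlongrightarrow> (\<Sum>n. c n)) (at_left 1)"
    using abel_nonneg[OF cnn sc] unfolding hyp3F2_def c_def .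
  have sr: "(\<lambda>x. indicator Delta x *\<^sub>R F x) = (\<lambda>x. indicator Delta x * F x)" by simp
  have int: "set_integrable lborel Delta F"
    unfolding set_integrable_def sr
    by (rule integrableI_nonneg) (use fin Fnn in auto)
  have "(LINT x:Delta|lborel. F x) = enn2real (\<integral>\<^sup>+x. ennreal (indicator Delta x * F x) \<partial>lborel)"
    unfolding set_lebesgue_integral_def sr
    by (rule integral_eq_nn_integral) (use Fnn in auto)
  also have "\<dots> = K * (\<Sum>n. c n)"
    unfolding I2 using Kpos cnn sc by (simp add: suminf_nonneg)
  finally have val: "(LINT x:Delta|lborel. F x) = K * (\<Sum>n. c n)" .
  have val': "(LINT x:Delta|lborel. F x) = betaB (a + p) q / a * (\<Sum>n. c n)" using val unfolding K_def .
  show ?thesis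
    unfolding F_def[symmetric]
    by (rule exI[of _ "\<Sum>n. c n"], intro conjI lim int val')
qed

end
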